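(* Let $g \geq 1$, let $A \subseteq [N]$ be a nonempty $B_3[g]$-set, let $0 < \delta < \tfrac14$, let $l = \lfloor \frac{1}{2\delta} \rfloor$, and suppose $N > \frac{2}{\delta}$. For $1 \leq k \leq l$ let \[ C_k = \bigl( A \cap ((k-1)\delta N,\, k\delta N] \bigr) \cup \bigl( A \cap [(1-k\delta)N,\, (1-(k-1)\delta)N) \bigr), \] and define $\alpha_k(\delta)$ by $\alpha_k(\delta)|A| = |C_k|$. Then for every $1 \leq k \leq l$, \[ \alpha_k(\delta)^3 |A|^3 \leq 72\, g\, \delta N, \] i.e. whenever $\alpha_k(\delta) > 0$, $|A| \leq \left( \frac{72 g \delta N}{\alpha_k(\delta)^3}\right)^{1/3}$.
   Context: $[N] = \{1,2,\dots,N\}$. For positive integers $h,g$, a set $A \subseteq [N]$ is a $B_h[g]$-set if for every integer $n$ there are at most $g$ distinct multisets $\{a_1,\dots,a_h\}$ of size $h$ with all $a_i \in A$ and $a_1 + \dots + a_h = n$. *)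

theory Defs
  imports "HOL-Analysis.Analysis" "HOL-Library.Multiset"
begin

definition Bhg_set :: "nat \<Rightarrow> nat \<Rightarrow> nat set \<Rightarrow> bool" where
  "Bhg_set h g A \<longleftrightarrow>
     (\<forall>n::nat. finite {M :: nat multiset. set_mset M \<subseteq> A \<and> size M = h \<and> sum_mset M = n}
        \<and> card {M :: nat multiset. set_mset M \<subseteq> A \<and> size M = h \<and> sum_mset M = n} \<le> g)"

definition Ck :: "nat set \<Rightarrow> real \<Rightarrow> nat \<Rightarrow> nat \<Rightarrow> nat set" where
  "Ck A \<delta> N k =
     {a \<in> A. real (k - 1) * \<delta> * N < real a \<and> real a \<le> real k * \<delta> * N}
   \<union> {a \<in> A. (1 - real k * \<delta>) * N \<le> real a \<and> real a < (1 - real (k - 1) * \<delta>) * N}"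

definition alpha_k :: "nat set \<Rightarrow> real \<Rightarrow> nat \<Rightarrow> nat \<Rightarrow> real" where
  "alpha_k A \<delta> N k = real (card (Ck A \<delta> N k)) / real (card A)"

end

theory Submission
  imports Defs
begin

lemma int_interval_finite:
  fixes x d :: real
  shows "finite {n::nat. x \<le> real n \<and> real n \<le> x + d}"
proof -
  have "{n::nat. x \<le> real n \<and> real n \<le> x + d} \<subseteq> {..nat \<lceil>x + d\<rceil>}"
  proof
    fix n assume "n \<in> {n::nat. x \<le> real n \<and> real n \<le> x + d}"
    then have "real n \<le> x + d" by auto
    then have "real n \<le> of_int \<lceil>x + d\<rceil>" by linarith
    then show "n \<in> {..nat \<lceil>x + d\<rceil>}" by auto
  qed
  then show ?thesis using finite_subset by blast
qed

lemma int_interval_card: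
  fixes x d :: real
  assumes "d \<ge> 0"
  shows "real (card {n::nat. x \<le> real n \<and> real n \<le> x + d}) \<le> d + 1"
proof (cases "{n::nat. x \<le> real n \<and> real n \<le> x + d} = {}")
  case True
  then show ?thesis unfolding True using assms by simp
next
  case False
  define S where "S = {n::nat. x \<le> real n \<and> real n \<le> x + d}"
  have fin: "finite S" unfolding S_def by (rule int_interval_finite)
  have ne: "S \<noteq> {}" using False S_def by simp
  define m where "m = Min S"
  define M where "M = Max S"
  have mS: "m \<in> S" using fin ne m_def by simp
  have MS: "M \<in> S" using fin ne M_def by simp
  have sub: "S \<subseteq> {m..M}" using fin ne m_def M_def by auto
  have "card S \<le> card {m..M}" using card_mono[OF finite_atLeastAtMost sub] .
  also have "\<dots> = M + 1 - m" by simp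
  finally have c: "card S \<le> M + 1 - m" .
  have "m \<le> M" using sub mS by auto
  have "real M - real m \<le> d" using mS MS unfolding S_def by auto
  then have "real (M + 1 - m) \<le> d + 1" using \<open>m \<le> M\<close> by (simp add: of_nat_diff)
  then show ?thesis using c S_def
    by (metis (no_types, lifting) of_nat_le_iff order_trans)
qed

lemma msum_bounds:
  fixes M :: "nat multiset" and a b d :: real
  assumes "\<forall>y\<in>#M. (a \<le> real y \<and> real y \<le> a + d) \<or> (b \<le> real y \<and> real y \<le> b + d)"
  shows "\<exists>t \<le> size M. real t * a + real (size M - t) * b \<le> real (sum_mset M) \<and>
     real (sum_mset M) \<le> real t * a + real (size M - t) * b + real (size M) * d"
  using assms
proof (induction M)
  case empty
  then show ?case by simp
next
  case (add x M)
  then obtain t where t: "t \<le> size M" "real t * a + real (size M - t) * b \<le> real (sum_mset M)"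
     "real (sum_mset M) \<le> real t * a + real (size M - t) * b + real (size M) * d" by auto
  have x: "(a \<le> real x \<and> real x \<le> a + d) \<or> (b \<le> real x \<and> real x \<le> b + d)" using add.prems by auto
  show ?case
  proof (cases "a \<le> real x \<and> real x \<le> a + d")
    case True
    have e: "size (add_mset x M) - (t+1) = size M - t" by simp
    show ?thesis
      apply (rule exI[of _ "t+1"])
      using t True by (simp add: e algebra_simps)
  next
    case False
    then have xb: "b \<le> real x \<and> real x \<le> b + d" using x by auto
    have e: "real (size (add_mset x M) - t) = real (size M - t) + 1" using t(1) by (simp add: of_nat_diff)
    show ?thesis
      apply (rule exI[of _ "t"])
      using t xb by (simp add: e algebra_simps)
  qed
qed

lemma choose3: "(((c::nat) + 2) choose 3) * 6 = c * (c+1) * (c+2)"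
proof (induction c)
  case 0
  then show ?case by simp
next
  case (Suc c)
  have "((Suc c + 2) choose 3) = ((c+2) choose 2) + ((c + 2) choose 3)"
    by (simp add: numeral_3_eq_3 numeral_2_eq_2)
  moreover have "((c+2) choose 2) * 2 = (c+2)*(c+1)"
    by (simp add: choose_two)
  ultimately show ?case using Suc by (simp add: algebra_simps)
qed


lemma final_arith:
  fixes c g D :: real
  assumes "c * (c+1) * (c+2) \<le> g * (72 * D + 24)" "0 \<le> c" "c \<le> 2 * D + 2" "D > 2" "g \<ge> 1"
  shows "c ^ 3 \<le> 72 * g * D"
proof (cases "c^2 \<ge> 8 * g")
  case True
  have "c * (c+1) * (c+2) = c^3 + 3 * c^2 + 2 * c" by (simp add: algebra_simps power2_eq_square power3_eq_cube)
  then show ?thesis using assms True by (simp add: algebra_simps)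
next
  case False
  have "c^3 = c * c^2" by (simp add: power2_eq_square power3_eq_cube)
  also have "\<dots> \<le> c * (8 * g)" using False assms(2) by (intro mult_left_mono) auto
  also have "\<dots> \<le> (2 * D + 2) * (8 * g)" using assms by (intro mult_right_mono) auto
  also have "\<dots> \<le> 72 * g * D" using assms by (simp add: algebra_simps)
  finally show ?thesis .
qed

theorem lemma2p2:
  fixes A :: "nat set" and g N k :: nat and \<delta> :: real
  assumes "g \<ge> 1"
    and "A \<subseteq> {1..N}" and "A \<noteq> {}"
    and "Bhg_set 3 g A"
    and "0 < \<delta>" and "\<delta> < 1/4"
    and "real N > 2 / \<delta>"
    and "1 \<le> k" and "real k \<le> of_int \<lfloor>1 / (2 * \<delta>)\<rfloor>"
  shows "(alpha_k A \<delta> N k) ^ 3 * real (card A) ^ 3 \<le> 72 * real g * \<delta> * real N"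
proof -
  define C where "C = Ck A \<delta> N k"
  define c where "c = card C"
  define D where "D = \<delta> * real N"
  define lo1 where "lo1 = real (k - 1) * \<delta> * N"
  define lo2 where "lo2 = (1 - real k * \<delta>) * N"
  have finA: "finite A" using assms(2) finite_subset by blast
  have cardA: "card A > 0" using finA assms(3) by (simp add: card_gt_0_iff)
  have CA: "C \<subseteq> A" unfolding C_def Ck_def by auto
  have finC: "finite C" using CA finA finite_subset by blast
  have D2: "D > 2" using assms(5,7) unfolding D_def by (simp add: field_simps)
  have rk: "real (k - 1) = real k - 1" using assms(8) by (simp add: of_nat_diff)
  have hi1: "real k * \<delta> * N = lo1 + D" unfolding lo1_def D_def rk by (simp add: algebra_simps)
  have hi2: "(1 - real (k - 1) * \<delta>) * N = lo2 + D" unfolding lo2_def D_def rk by (simp add: algebra_simps)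
  have memb: "\<forall>y\<in>C. (lo1 \<le> real y \<and> real y \<le> lo1 + D) \<or> (lo2 \<le> real y \<and> real y \<le> lo2 + D)"
    using hi1 hi2 unfolding C_def Ck_def lo1_def[symmetric] lo2_def[symmetric] by auto
  have CU: "C \<subseteq> {n::nat. lo1 \<le> real n \<and> real n \<le> lo1 + D} \<union> {n::nat. lo2 \<le> real n \<and> real n \<le> lo2 + D}"
    using memb by auto
  have "card C \<le> card {n::nat. lo1 \<le> real n \<and> real n \<le> lo1 + D} + card {n::nat. lo2 \<le> real n \<and> real n \<le> lo2 + D}"
    by (rule order_trans[OF card_mono[OF _ CU] card_Un_le]) (simp add: int_interval_finite)
  then have "real c \<le> real (card {n::nat. lo1 \<le> real n \<and> real n \<le> lo1 + D}) + real (card {n::nat. lo2 \<le> real n \<and> real n \<le> lo2 + D})"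
    unfolding c_def by linarith
  also have "\<dots> \<le> (D + 1) + (D + 1)" using D2 by (intro add_mono int_interval_card) auto
  finally have cup: "real c \<le> 2 * D + 2" by simp
  define S where "S = multisets_of_size C 3"
  have finS: "finite S" unfolding S_def using finC by blast
  have cardS: "card S * 6 = c * (c+1) * (c+2)"
    unfolding S_def card_multisets_of_size[OF finC] c_def[symmetric]
    using choose3[of c] by (simp add: numeral_3_eq_3)
  define J where "J = (\<lambda>t::nat. {n::nat. real t * lo1 + real (3 - t) * lo2 \<le> real n \<and>
        real n \<le> real t * lo1 + real (3 - t) * lo2 + 3 * D})"
  have img: "sum_mset ` S \<subseteq> (\<Union>t\<in>{0..3}. J t)"
  proof
    fix n assume "n \<in> sum_mset ` S"
    then obtain M where M: "M \<in> S" "n = sum_mset M" by auto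
    have sz: "size M = 3" and sub: "set_mset M \<subseteq> C" using M(1) unfolding S_def multisets_of_size_def by auto
    have "\<forall>y\<in>#M. (lo1 \<le> real y \<and> real y \<le> lo1 + D) \<or> (lo2 \<le> real y \<and> real y \<le> lo2 + D)"
      using memb sub by auto
    from msum_bounds[OF this] obtain t where "t \<le> size M"
      "real t * lo1 + real (size M - t) * lo2 \<le> real (sum_mset M)"
      "real (sum_mset M) \<le> real t * lo1 + real (size M - t) * lo2 + real (size M) * D" by blast
    then show "n \<in> (\<Union>t\<in>{0..3}. J t)" using sz M(2) unfolding J_def by auto
  qed
  have finJ: "\<And>t. finite (J t)" unfolding J_def by (rule int_interval_finite)
  have "card (sum_mset ` S) \<le> card (\<Union>t\<in>{0..3}. J t)"
    using img finJ by (intro card_mono) auto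
  also have "\<dots> \<le> (\<Sum>t\<in>{0..3::nat}. card (J t))" by (rule card_UN_le) simp
  finally have "real (card (sum_mset ` S)) \<le> (\<Sum>t\<in>{0..3::nat}. real (card (J t)))"
    by (subst of_nat_sum[symmetric]) (simp only: of_nat_le_iff)
  also have "\<dots> \<le> (\<Sum>t\<in>{0..3::nat}. 3 * D + 1)"
    unfolding J_def using D2 by (intro sum_mono int_interval_card) auto
  finally have imgc: "real (card (sum_mset ` S)) \<le> 4 * (3 * D + 1)" by simp
  have fib: "card {M\<in>S. sum_mset M = n} \<le> g" for n
  proof -
    have "{M\<in>S. sum_mset M = n} \<subseteq> {M :: nat multiset. set_mset M \<subseteq> A \<and> size M = 3 \<and> sum_mset M = n}"
      using CA unfolding S_def multisets_of_size_def by auto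
    moreover have "finite {M :: nat multiset. set_mset M \<subseteq> A \<and> size M = 3 \<and> sum_mset M = n}"
      "card {M :: nat multiset. set_mset M \<subseteq> A \<and> size M = 3 \<and> sum_mset M = n} \<le> g"
      using assms(4) unfolding Bhg_set_def by auto
    ultimately show ?thesis by (meson card_mono order_trans)
  qed
  have Seq: "S = (\<Union>n\<in>sum_mset ` S. {M\<in>S. sum_mset M = n})" by auto
  have "card S = card (\<Union>n\<in>sum_mset ` S. {M\<in>S. sum_mset M = n})" by (rule arg_cong[OF Seq])
  also have "\<dots> \<le> (\<Sum>n\<in>sum_mset ` S. card {M\<in>S. sum_mset M = n})"
    by (rule card_UN_le) (simp add: finS)
  also have "\<dots> \<le> (\<Sum>n\<in>sum_mset ` S. g)" by (intro sum_mono fib)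
  finally have "card S \<le> card (sum_mset ` S) * g" by simp
  then have "real (card S) \<le> real (card (sum_mset ` S)) * real g" by (simp only: of_nat_mult[symmetric] of_nat_le_iff)
  also have "\<dots> \<le> 4 * (3 * D + 1) * real g" using imgc by (intro mult_right_mono) auto
  finally have "real (card S) * 6 \<le> real g * (72 * D + 24)" by (simp add: algebra_simps)
  then have main: "real c * (real c + 1) * (real c + 2) \<le> real g * (72 * D + 24)"
  proof -
    have "real (card S) * 6 = real c * (real c + 1) * (real c + 2)"
      using arg_cong[OF cardS, of real] by (simp add: algebra_simps)
    then show ?thesis using \<open>real (card S) * 6 \<le> real g * (72 * D + 24)\<close> by simp
  qed
  have "real c ^ 3 \<le> 72 * real g * D"
    using final_arith[OF main _ cup D2] assms(1) by simp
  moreover have "(alpha_k A \<delta> N k) ^ 3 * real (card A) ^ 3 = real c ^ 3"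
    unfolding alpha_k_def C_def[symmetric] c_def[symmetric] using cardA
    by (simp add: power_divide)
  ultimately show ?thesis unfolding D_def by (simp add: algebra_simps)
qed

end
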